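(* Let $\boldsymbol X_1,\boldsymbol X_2,\dots$ be i.i.d. random vectors in $\mathbb R^2$ with distribution $H_0$. For each $n$ let $\boldsymbol T_{0n}\in\mathbb R^2$ and $\boldsymbol C_{0n}$ (a $2\times 2$ symmetric invertible matrix) be location and scatter estimators computed from $\boldsymbol X_1,\dots,\boldsymbol X_n$, such that $\boldsymbol T_{0n}\to\boldsymbol\mu_0\in\mathbb R^2$ and $\boldsymbol C_{0n}\to\boldsymbol\Sigma_0$ almost surely $[H_0]$, where $\boldsymbol\Sigma_0$ is a $2\times2$ positive definite symmetric matrix. Let $$G_0(t)=P_{H_0}\bigl((\boldsymbol X-\boldsymbol\mu_0)^t\boldsymbol\Sigma_0^{-1}(\boldsymbol X-\boldsymbol\mu_0)\le t\bigr),$$ and assume $G_0$ is continuous. Let $D_i=(\boldsymbol X_i-\boldsymbol T_{0n})^t\boldsymbol C_{0n}^{-1}(\boldsymbol X_i-\boldsymbol T_{0n})$, $i=1,\dots,n$, and let $G_n(t)=\frac1n\sum_{i=1}^n I(D_i\le t)$ be their empirical distribution function. Let $G$ be a reference distribution function on $[0,\infty)$ (e.g. $\chi^2_2$), let $\alpha\in(0,1)$ and $\eta=G^{-1}(\alpha)$, and define $$d_n=\sup_{t\ge\eta}\bigl\{G(t)-G_n(t)\bigr\}^{+},\qquad n_0=\lfloor n d_n\rfloor,$$ where $\{a\}^+=\max(a,0)$. If the reference distribution satisfies $$\max_{t\ge\eta}\{G(t)-G_0(t)\}\le 0,$$ then $n_0/n\to 0$ almost surely.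
   Context: This is the consistency property of the bivariate filter: the filter flags the $n_0=\lfloor n d_n\rfloor$ observations with the largest distances $D_i$ as outliers. *)

theory Defs
  imports "HOL-Probability.Probability"
begin

definition mahal :: "real^2 \<Rightarrow> real^2 \<Rightarrow> real^2^2 \<Rightarrow> real" where
  "mahal x m S = (x - m) \<bullet> (matrix_inv S *v (x - m))"

definition emp_cdf :: "nat \<Rightarrow> (nat \<Rightarrow> real) \<Rightarrow> real \<Rightarrow> real" where
  "emp_cdf n D t = real (card {i \<in> {1..n}. D i \<le> t}) / real n"

definition quantile :: "(real \<Rightarrow> real) \<Rightarrow> real \<Rightarrow> real" where
  "quantile G a = Inf {t. a \<le> G t}"

definition pos_part :: "real \<Rightarrow> real" where
  "pos_part a = max a 0"

end

theory Submission
  imports Defs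
begin

definition adj2 :: "real^2^2 \<Rightarrow> real^2^2" where
  "adj2 A = (\<chi> i j. (if i = 1 then (if j = 1 then A$2$2 else - A$1$2)
                    else (if j = 1 then - A$2$1 else A$1$1)) / det A)"

lemma adj2_right:
  fixes A :: "real^2^2"
  assumes "det A \<noteq> 0"
  shows "A ** adj2 A = mat 1"
proof -
  have d: "det A = A$1$1*A$2$2 - A$1$2*A$2$1" by (rule det_2)
  show ?thesis
  using assms
  unfolding adj2_def matrix_matrix_mult_def mat_def
  apply (simp add: vec_eq_iff forall_2 sum_2)
  apply (simp add: divide_simps)
  apply (simp add: d algebra_simps)
  done
qed

lemma matrix_inv_2:
  fixes A :: "real^2^2"
  assumes "det A \<noteq> 0"
  shows "matrix_inv A = adj2 A"
proof -
  have r: "A ** adj2 A = mat 1" by (rule adj2_right[OF assms])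
  hence l: "adj2 A ** A = mat 1" using matrix_left_right_inverse by blast
  have "\<exists>A'. A ** A' = mat 1 \<and> A' ** A = mat 1" using r l by blast
  hence m: "A ** matrix_inv A = mat 1 \<and> matrix_inv A ** A = mat 1"
    unfolding matrix_inv_def by (rule someI_ex)
  have "matrix_inv A = (adj2 A ** A) ** matrix_inv A" by (simp add: l)
  also have "\<dots> = adj2 A ** (A ** matrix_inv A)" by (simp add: matrix_mul_assoc)
  also have "\<dots> = adj2 A" using m by simp
  finally show ?thesis .
qed

lemma matrix_inv_tendsto:
  fixes C :: "nat \<Rightarrow> real^2^2"
  assumes "C \<longlonglongrightarrow> S" "det S \<noteq> 0" "\<And>n. invertible (C n)"
  shows "(\<lambda>n. matrix_inv (C n)) \<longlonglongrightarrow> matrix_inv S"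
proof -
  have e: "matrix_inv (C n) = adj2 (C n)" for n
    using assms(3) invertible_det_nz matrix_inv_2 by blast
  have d: "(\<lambda>n. det (C n)) \<longlonglongrightarrow> det S"
    unfolding det_2 by (intro tendsto_intros assms(1))
  show ?thesis
    unfolding e matrix_inv_2[OF assms(2)] adj2_def
  proof (intro tendsto_vec_lambda tendsto_divide d)
    fix i j :: 2
    show "(\<lambda>x. if i = 1 then if j = 1 then C x $ 2 $ 2 else - C x $ 1 $ 2
                else if j = 1 then - C x $ 2 $ 1 else C x $ 1 $ 1)
           \<longlonglongrightarrow> (if i = 1 then if j = 1 then S $ 2 $ 2 else - S $ 1 $ 2
                 else if j = 1 then - S $ 2 $ 1 else S $ 1 $ 1)"
      by (cases "i = 1"; cases "j = 1") (auto intro!: tendsto_intros assms(1))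
  qed (use assms(2) in auto)
qed

lemma pd_det:
  fixes S :: "real^2^2"
  assumes "\<And>x. x \<noteq> 0 \<Longrightarrow> x \<bullet> (S *v x) > 0"
  shows "det S \<noteq> 0"
proof -
  have "\<forall>x. S *v x = 0 \<longrightarrow> x = 0"
    using assms by (metis inner_zero_right less_irrefl)
  hence "invertible S"
    using matrix_left_invertible_ker invertible_left_inverse by blast
  thus ?thesis using invertible_det_nz by blast
qed


definition mnorm :: "real^2^2 \<Rightarrow> real" where
  "mnorm A = (\<Sum>i\<in>UNIV. \<Sum>j\<in>UNIV. \<bar>A $ i $ j\<bar>)"

lemma norm_mv: "norm (A *v x) \<le> mnorm A * norm x"
proof -
  have "norm (A *v x) \<le> (\<Sum>i\<in>UNIV. \<bar>(A *v x) $ i\<bar>)"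
    by (rule norm_le_l1_cart)
  also have "\<dots> \<le> (\<Sum>i\<in>UNIV. \<Sum>j\<in>UNIV. \<bar>A $ i $ j\<bar> * norm x)"
  proof (rule sum_mono)
    fix i
    have "\<bar>(A *v x) $ i\<bar> \<le> \<bar>\<Sum>j\<in>UNIV. A $ i $ j * x $ j\<bar>"
      by (simp add: matrix_vector_mult_def)
    also have "\<dots> \<le> (\<Sum>j\<in>UNIV. \<bar>A $ i $ j * x $ j\<bar>)"
      by (rule sum_abs)
    also have "\<dots> \<le> (\<Sum>j\<in>UNIV. \<bar>A $ i $ j\<bar> * norm x)"
      by (rule sum_mono) (simp add: abs_mult component_le_norm_cart mult_left_mono)
    finally show "\<bar>(A *v x) $ i\<bar> \<le> (\<Sum>j\<in>UNIV. \<bar>A $ i $ j\<bar> * norm x)" .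
  qed
  finally show ?thesis by (simp add: sum_distrib_right mnorm_def)
qed

lemma mnorm_nonneg: "mnorm A \<ge> 0"
  unfolding mnorm_def by (intro sum_nonneg) auto

lemma mnorm_add: "mnorm (A + B) \<le> mnorm A + mnorm B"
  unfolding mnorm_def sum.distrib[symmetric]
  by (intro sum_mono) (simp add: abs_triangle_ineq)

lemma inner_mv: "\<bar>u \<bullet> (A *v w)\<bar> \<le> norm u * mnorm A * norm w"
proof -
  have "\<bar>u \<bullet> (A *v w)\<bar> \<le> norm u * norm (A *v w)" by (rule Cauchy_Schwarz_ineq2)
  also have "\<dots> \<le> norm u * (mnorm A * norm w)" by (intro mult_left_mono norm_mv) auto
  finally show ?thesis by (simp add: mult.assoc)
qed

lemma quad_diff:
  fixes u v :: "real^2"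
  shows "\<bar>u \<bullet> (B *v u) - v \<bullet> (B0 *v v)\<bar> \<le>
    norm (u - v) * mnorm B * norm u + norm v * mnorm B * norm (u - v) + norm v * mnorm (B - B0) * norm v"
proof -
  have eq: "u \<bullet> (B *v u) - v \<bullet> (B0 *v v) = (u - v) \<bullet> (B *v u) + v \<bullet> (B *v (u - v)) + v \<bullet> ((B - B0) *v v)"
    by (simp add: inner_diff_left inner_diff_right matrix_vector_mult_diff_distrib matrix_vector_mult_diff_rdistrib)
  show ?thesis unfolding eq
    using inner_mv[of "u - v" B u] inner_mv[of v B "u - v"] inner_mv[of v "B - B0" v] by linarith
qed

lemma mnorm_tendsto:
  fixes B :: "nat \<Rightarrow> real^2^2"
  assumes "B \<longlonglongrightarrow> B0"
  shows "(\<lambda>n. mnorm (B n - B0)) \<longlonglongrightarrow> 0"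
proof -
  have z: "(\<lambda>n. B n - B0) \<longlonglongrightarrow> 0" using assms by (rule LIM_zero)
  have "(\<lambda>n. mnorm (B n - B0)) \<longlonglongrightarrow> (\<Sum>i\<in>UNIV. \<Sum>j\<in>UNIV. \<bar>(0::real^2^2) $ i $ j\<bar>)"
    unfolding mnorm_def by (intro tendsto_intros z)
  thus ?thesis by simp
qed

lemma perturb:
  fixes m :: "nat \<Rightarrow> real^2" and B :: "nat \<Rightarrow> real^2^2"
  assumes m: "m \<longlonglongrightarrow> \<mu>" and B: "B \<longlonglongrightarrow> B0" and R: "R \<ge> 0" and \<delta>: "\<delta> > 0"
  shows "eventually (\<lambda>n. \<forall>x. norm x \<le> R \<longrightarrow>
      \<bar>(x - m n) \<bullet> (B n *v (x - m n)) - (x - \<mu>) \<bullet> (B0 *v (x - \<mu>))\<bar> < \<delta>) sequentially"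
proof -
  define e where "e n = norm (m n - \<mu>) + mnorm (B n - B0)" for n
  have "(\<lambda>n. m n - \<mu>) \<longlonglongrightarrow> 0" using m by (rule LIM_zero)
  hence "(\<lambda>n. norm (m n - \<mu>)) \<longlonglongrightarrow> 0" by (rule tendsto_norm_zero)
  hence "e \<longlonglongrightarrow> 0 + 0" unfolding e_def by (intro tendsto_add mnorm_tendsto B)
  hence e0: "e \<longlonglongrightarrow> 0" by simp
  define r where "r = R + norm \<mu>"
  define K where "K = 2 * (r + 1) * (mnorm B0 + 1) + r^2 + 1"
  have r0: "r \<ge> 0" using R by (simp add: r_def)
  have K0: "K > 0" unfolding K_def using r0 mnorm_nonneg[of B0] by (simp add: add_pos_nonneg)
  have "min 1 (\<delta> / K) > 0" using K0 \<delta> by simp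
  from order_tendstoD(2)[OF e0 this]
  have ev: "eventually (\<lambda>n. e n < min 1 (\<delta> / K)) sequentially" .
  show ?thesis
  proof (rule eventually_mono[OF ev], intro allI impI)
    fix n and x :: "real^2"
    assume en: "e n < min 1 (\<delta> / K)" and x: "norm x \<le> R"
    define u where "u = x - m n"
    define v where "v = x - \<mu>"
    have e1: "norm (m n - \<mu>) \<le> e n" "mnorm (B n - B0) \<le> e n" "e n \<le> 1" "e n \<ge> 0"
      using en mnorm_nonneg[of "B n - B0"] unfolding e_def by auto
    have uv: "norm (u - v) \<le> e n"
      using e1 by (simp add: u_def v_def norm_minus_commute)
    have nv: "norm v \<le> r" unfolding v_def r_def using x norm_triangle_ineq4[of x \<mu>] by linarith
    have nu: "norm u \<le> r + 1"
    proof -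
      have "norm u \<le> norm v + norm (u - v)" using norm_triangle_ineq2[of u v] by linarith
      thus ?thesis using nv uv e1 by linarith
    qed
    have mB: "mnorm (B n) \<le> mnorm B0 + 1"
      using mnorm_add[of B0 "B n - B0"] e1 by simp
    have t1: "norm (u - v) * mnorm (B n) * norm u \<le> e n * (mnorm B0 + 1) * (r + 1)"
      by (intro mult_mono uv mB nu) (auto simp: mnorm_nonneg e1 intro: mult_nonneg_nonneg)
    have t2: "norm v * mnorm (B n) * norm (u - v) \<le> r * (mnorm B0 + 1) * e n"
      by (intro mult_mono uv mB nv) (auto simp: mnorm_nonneg r0 intro: mult_nonneg_nonneg)
    have t3: "norm v * mnorm (B n - B0) * norm v \<le> r * e n * r"
      by (intro mult_mono nv e1) (auto simp: mnorm_nonneg r0 e1 intro: mult_nonneg_nonneg)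
    have "\<bar>u \<bullet> (B n *v u) - v \<bullet> (B0 *v v)\<bar> \<le> e n * (mnorm B0 + 1) * (r + 1) + r * (mnorm B0 + 1) * e n + r * e n * r"
      using quad_diff[of u "B n" v B0] t1 t2 t3 by linarith
    also have "\<dots> \<le> e n * K"
      unfolding K_def using e1 r0 mnorm_nonneg[of B0]
      by (simp add: algebra_simps power2_eq_square)
    also have "\<dots> < (\<delta> / K) * K"
      using en K0 by (intro mult_strict_right_mono) auto
    also have "\<dots> = \<delta>" using K0 by simp
    finally show "\<bar>(x - m n) \<bullet> (B n *v (x - m n)) - (x - \<mu>) \<bullet> (B0 *v (x - \<mu>))\<bar> < \<delta>"
      by (simp add: u_def v_def)
  qed
qed


lemma freq_lower:
  fixes M :: "'a measure" and X :: "nat \<Rightarrow> 'a \<Rightarrow> 'b::topological_space" and H0 :: "'b measure"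
  assumes M: "prob_space M"
    and X_rv: "\<And>i. i \<ge> 1 \<Longrightarrow> X i \<in> borel_measurable M"
    and X_indep: "prob_space.indep_vars M (\<lambda>_. borel) X {1..}"
    and X_dist: "\<And>i. i \<ge> 1 \<Longrightarrow> distr M borel (X i) = H0"
    and E: "E \<in> sets borel" and e: "e > 0"
  shows "AE \<omega> in M. eventually (\<lambda>n. real (card {i\<in>{1..n}. X i \<omega> \<in> E}) / real n > measure H0 E - e) sequentially"
proof -
  interpret prob_space M by (rule M)
  define Z where "Z i \<omega> = (indicator E (X i \<omega>) :: real)" for i \<omega>
  have Zm[measurable]: "Z i \<in> borel_measurable M" if "i \<ge> 1" for i
    unfolding Z_def using X_rv[OF that] E by measurable
  have Zind: "indep_vars (\<lambda>_. borel) Z I" if "I \<subseteq> {1..}" for I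
    unfolding Z_def
    by (rule indep_vars_compose2[OF indep_vars_subset[OF X_indep that]]) (use E in auto)
  have Zdist: "distr M borel (Z i) = distr M borel (Z 1)" if "i \<ge> 1" for i
  proof -
    have iE: "(indicator E :: 'b \<Rightarrow> real) \<in> borel_measurable (borel :: 'b measure)"
      using E by (rule borel_measurable_indicator)
    have c: "distr M borel (Z k) = distr (distr M borel (X k)) borel (indicator E :: 'b \<Rightarrow> real)" if "k \<ge> 1" for k
    proof -
      have "distr (distr M borel (X k)) borel (indicator E :: 'b \<Rightarrow> real) = distr M borel (indicator E \<circ> X k)"
        by (rule distr_distr[OF iE X_rv[OF that]])
      thus ?thesis by (simp add: Z_def[abs_def] comp_def)
    qed
    have d1: "distr M borel (X 1) = H0" by (rule X_dist) simp
    have di: "distr M borel (X i) = H0" by (rule X_dist[OF that])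
    show ?thesis by (simp only: c[OF that] c[of 1, OF order_refl] d1 di)
  qed
  define p where "p = expectation (Z 1)"
  have p: "p = measure H0 E"
  proof -
    have "p = integral\<^sup>L (distr M borel (X 1)) (indicator E)"
      unfolding p_def Z_def using X_rv[of 1] E by (subst integral_distr) auto
    also have "\<dots> = integral\<^sup>L H0 (indicator E)"
    proof -
      have d1: "distr M borel (X 1) = H0" by (rule X_dist) simp
      show ?thesis by (simp only: d1)
    qed
    also have "\<dots> = measure H0 E"
    proof -
      have sp: "space H0 = UNIV" using X_dist[of 1] by (metis le_refl space_borel space_distr)
      show ?thesis by (simp add: sp)
    qed
    finally show ?thesis .
  qed
  define A where "A n = {\<omega>\<in>space M. (\<Sum>i\<in>{1..n}. Z i \<omega>) / real n \<le> p - e}" for n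
  have Am: "A n \<in> sets M" for n
    unfolding A_def by (measurable; use Zm in auto)
  have Ab: "measure M (A n) \<le> exp (-2 * e\<^sup>2) ^ n" for n
  proof (cases "n = 0")
    case True thus ?thesis by simp
  next
    case False
    interpret H: Hoeffding_ineq_iid M "{1..n}" Z "Z 1" 0 1 p
    proof unfold_locales
      show "indep_vars (\<lambda>_. borel) Z {1..n}" by (rule Zind) auto
      show "\<And>i. i \<in> {1..n} \<Longrightarrow> distr M borel (Z i) = distr M borel (Z 1)"
        by (rule Zdist) auto
      show "random_variable borel (Z 1)" using Zm by simp
      show "AE x in M. Z 1 x \<in> {0..1}" by (simp add: Z_def)
    qed (simp_all add: p_def)
    have "measure M (A n) \<le> exp (-2 * real (card {1..n}) * e\<^sup>2 / (1 - 0)\<^sup>2)"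
      unfolding A_def using H.Hoeffding_ineq_le'[of e] e False by simp
    also have "\<dots> = exp (-2 * e\<^sup>2) ^ n" by (simp add: exp_of_nat_mult[symmetric] mult_ac)
    finally show ?thesis .
  qed
  have "summable (\<lambda>n. exp (-2 * e\<^sup>2) ^ n)"
    using e by (intro summable_geometric) simp
  hence sm: "summable (\<lambda>n. measure M (A n))"
    by (rule summable_comparison_test') (use Ab in auto)
  have "AE \<omega> in M. eventually (\<lambda>n. \<omega> \<in> space M - A n) sequentially"
    by (rule borel_cantelli_AE1[OF Am _ sm]) (simp add: emeasure_eq_measure)
  thus ?thesis
  proof (rule eventually_mono)
    fix \<omega> assume "eventually (\<lambda>n. \<omega> \<in> space M - A n) sequentially"
    thus "eventually (\<lambda>n. real (card {i\<in>{1..n}. X i \<omega> \<in> E}) / real n > measure H0 E - e) sequentially"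
    proof (rule eventually_mono)
      fix n assume "\<omega> \<in> space M - A n"
      moreover have "(\<Sum>i\<in>{1..n}. Z i \<omega>) = real (card {i\<in>{1..n}. X i \<omega> \<in> E})"
      proof -
        have "(\<Sum>i\<in>{1..n}. Z i \<omega>) = (\<Sum>i\<in>{i\<in>{1..n}. X i \<omega> \<in> E}. 1)"
          unfolding Z_def indicator_def by (simp add: sum.If_cases Int_def conj_ac)
        thus ?thesis by simp
      qed
      ultimately show "real (card {i\<in>{1..n}. X i \<omega> \<in> E}) / real n > measure H0 E - e"
        unfolding A_def p by auto
    qed
  qed
qed


lemma data_exists:
  fixes H0 :: "(real^2) measure" and f :: "real^2 \<Rightarrow> real"
  assumes H: "prob_space H0" "sets H0 = sets borel"
    and f[measurable]: "f \<in> borel_measurable borel"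
    and cont: "continuous_on UNIV (\<lambda>t. measure H0 {x. f x \<le> t})"
    and \<epsilon>: "\<epsilon> > 0"
  shows "\<exists>R A \<delta>. R \<ge> 0 \<and> finite A \<and> \<delta> > 0 \<and> measure H0 {x. R < norm x} \<le> \<epsilon>/4 \<and>
     (\<forall>t. measure H0 {x. f x \<le> t} \<le> \<epsilon> \<or>
          (\<exists>a\<in>A. a + \<delta> \<le> t \<and> measure H0 {x. f x \<le> t} - \<epsilon>/2 \<le> measure H0 {x. f x \<le> a}))"
proof -
  interpret prob_space H0 by (rule H(1))
  define G where "G t = measure H0 {x. f x \<le> t}" for t
  have sp: "space H0 = UNIV" using sets_eq_imp_space_eq[OF H(2)] by simp
  have Gm: "{x. f x \<le> t} \<in> sets H0" for t
  proof -
    have "{x. f x \<le> t} \<in> sets borel" by measurable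
    thus ?thesis using H(2) by simp
  qed
  have Nm: "{x::real^2. r < norm x} \<in> sets H0" for r
  proof -
    have "{x::real^2. r < norm x} \<in> sets borel" by measurable
    thus ?thesis using H(2) by simp
  qed
  have Gmono: "G s \<le> G t" if "s \<le> t" for s t
    unfolding G_def using that by (intro finite_measure_mono Gm) auto
  have G1: "G t \<le> 1" for t unfolding G_def by simp
  have "(\<lambda>n. measure H0 {x. f x \<le> - real n}) \<longlonglongrightarrow> measure H0 (\<Inter>n. {x. f x \<le> - real n})"
    by (intro finite_Lim_measure_decseq) (auto simp: Gm decseq_def)
  moreover have "(\<Inter>n. {x. f x \<le> - real n}) = {}"
  proof (safe)
    fix x assume "x \<in> (\<Inter>n. {x. f x \<le> - real n})"
    moreover obtain n :: nat where "- f x < real n" using reals_Archimedean2 by blast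
    ultimately have "f x \<le> - real n" "- f x < real n" by auto
    thus "x \<in> {}" by linarith
  qed
  ultimately have "(\<lambda>n. G (- real n)) \<longlonglongrightarrow> 0" unfolding G_def by simp
  from order_tendstoD(2)[OF this \<epsilon>] obtain n1 where "G (- real n1) < \<epsilon>"
    by (auto simp: eventually_sequentially)
  define L where "L = - real n1"
  have GL: "G L \<le> \<epsilon>" using \<open>G (- real n1) < \<epsilon>\<close> by (simp add: L_def)
  have "(\<lambda>n. measure H0 {x. f x \<le> real n}) \<longlonglongrightarrow> measure H0 (\<Union>n. {x. f x \<le> real n})"
    by (intro finite_Lim_measure_incseq) (auto simp: Gm incseq_def)
  moreover have "(\<Union>n. {x. f x \<le> real n}) = UNIV"
  proof (safe)
    fix x
    obtain n :: nat where "f x < real n" using reals_Archimedean2 by blast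
    thus "x \<in> (\<Union>n. {x. f x \<le> real n})" by (auto intro!: exI[of _ n])
  qed auto
  moreover have "measure H0 UNIV = 1" using prob_space sp by simp
  ultimately have lim1: "(\<lambda>n. G (real n)) \<longlonglongrightarrow> 1" unfolding G_def by simp
  have "1 - \<epsilon>/4 < (1::real)" using \<epsilon> by simp
  from order_tendstoD(1)[OF lim1 this] obtain n2 where "G (real n2) > 1 - \<epsilon>/4"
    by (auto simp: eventually_sequentially)
  define U where "U = max (real n2) L"
  have GU: "G U \<ge> 1 - \<epsilon>/4"
    using Gmono[of "real n2" U] \<open>G (real n2) > 1 - \<epsilon>/4\<close> by (simp add: U_def)
  have LU: "L \<le> U" by (simp add: U_def)
  have "(\<lambda>n. measure H0 {x::real^2. real n < norm x}) \<longlonglongrightarrow> measure H0 (\<Inter>n. {x::real^2. real n < norm x})"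
    by (intro finite_Lim_measure_decseq) (auto simp: Nm decseq_def)
  moreover have "(\<Inter>n. {x::real^2. real n < norm x}) = {}"
  proof (safe)
    fix x :: "real^2" assume "x \<in> (\<Inter>n. {x::real^2. real n < norm x})"
    moreover obtain n :: nat where "norm x < real n" using reals_Archimedean2 by blast
    ultimately have "real n < norm x" "norm x < real n" by auto
    thus "x \<in> {}" by linarith
  qed
  ultimately have lim2: "(\<lambda>n. measure H0 {x::real^2. real n < norm x}) \<longlonglongrightarrow> 0" by simp
  have "\<epsilon>/4 > 0" using \<epsilon> by simp
  from order_tendstoD(2)[OF lim2 this] obtain n3 where n3: "measure H0 {x::real^2. real n3 < norm x} < \<epsilon>/4"
    by (auto simp: eventually_sequentially)
  have "uniformly_continuous_on {L-1..U+1} G"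
    using cont unfolding G_def
    by (intro compact_uniformly_continuous) (auto intro: continuous_on_subset)
  then obtain d where d: "d > 0" and dG: "\<And>x y. x \<in> {L-1..U+1} \<Longrightarrow> y \<in> {L-1..U+1} \<Longrightarrow> dist y x < d \<Longrightarrow> dist (G y) (G x) < \<epsilon>/4"
    unfolding uniformly_continuous_on_def using \<open>\<epsilon>/4 > 0\<close> by metis
  define \<delta> where "\<delta> = min d 1 / 3"
  have \<delta>0: "\<delta> > 0" and \<delta>1: "\<delta> \<le> 1" and \<delta>d: "3 * \<delta> \<le> d" using d by (auto simp: \<delta>_def)
  define N where "N = nat \<lceil>(U - L + 2) / \<delta>\<rceil>"
  define A where "A = (\<lambda>j. L - 1 + real j * \<delta>) ` {0..N}"
  have "\<forall>t. G t \<le> \<epsilon> \<or> (\<exists>a\<in>A. a + \<delta> \<le> t \<and> G t - \<epsilon>/2 \<le> G a)"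
  proof
    fix t
    show "G t \<le> \<epsilon> \<or> (\<exists>a\<in>A. a + \<delta> \<le> t \<and> G t - \<epsilon>/2 \<le> G a)"
    proof (cases "t < L")
      case True thus ?thesis using Gmono[of t L] GL by auto
    next
      case False
      define t' where "t' = min t (U + 1)"
      have t'L: "L \<le> t'" "t' \<le> U + 1" "t' \<le> t" using False LU by (auto simp: t'_def)
      define q where "q = (t' - L + 1 - \<delta>) / \<delta>"
      have q0: "q \<ge> 0" unfolding q_def using t'L \<delta>0 \<delta>1 by simp
      define j where "j = nat \<lfloor>q\<rfloor>"
      have jq: "real j \<le> q" "q < real j + 1" using q0 by (auto simp: j_def)
      define a where "a = L - 1 + real j * \<delta>"
      have qd: "q * \<delta> = t' - L + 1 - \<delta>" unfolding q_def using \<delta>0 by simp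
      have "real j * \<delta> \<le> q * \<delta>" using jq \<delta>0 by (intro mult_right_mono) auto
      hence a1: "a + \<delta> \<le> t'" unfolding a_def using qd by linarith
      have "q * \<delta> < (real j + 1) * \<delta>" using jq \<delta>0 by (intro mult_strict_right_mono) auto
      hence a2: "t' - 2 * \<delta> < a" unfolding a_def using qd by (simp add: algebra_simps)
      have a3: "L - 1 \<le> a" unfolding a_def using \<delta>0 by simp
      have jN: "j \<le> N"
      proof -
        have "q \<le> (U - L + 2) / \<delta>" unfolding q_def using t'L \<delta>0
          by (intro divide_right_mono) auto
        hence "real j \<le> (U - L + 2) / \<delta>" using jq by linarith
        thus ?thesis unfolding N_def by linarith
      qed
      have aA: "a \<in> A" unfolding A_def a_def using jN by auto
      have "dist a t' < d" using a1 a2 \<delta>0 \<delta>d by (simp add: dist_real_def)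
      hence "dist (G a) (G t') < \<epsilon>/4"
        using dG[of t' a] t'L a1 a3 LU \<delta>0 by simp
      hence Ga: "G t' - \<epsilon>/4 < G a" unfolding dist_real_def by linarith
      have "G t - \<epsilon>/2 \<le> G a"
      proof (cases "t \<le> U + 1")
        case True thus ?thesis using Ga \<epsilon> by (simp add: t'_def)
      next
        case False
        hence "t' = U + 1" by (simp add: t'_def)
        hence "G U \<le> G t'" using Gmono[of U "U+1"] by simp
        thus ?thesis using Ga GU G1[of t] by linarith
      qed
      thus ?thesis using aA a1 t'L by auto
    qed
  qed
  moreover have "finite A" unfolding A_def by simp
  ultimately show ?thesis using n3 \<delta>0 unfolding G_def
    by (intro exI[of _ "real n3"] exI[of _ A] exI[of _ \<delta>]) auto
qed


theorem proposition2:
  fixes M :: "'a measure"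
    and H0 :: "(real^2) measure"
    and X :: "nat \<Rightarrow> 'a \<Rightarrow> real^2"
    and T :: "nat \<Rightarrow> 'a \<Rightarrow> real^2"
    and C :: "nat \<Rightarrow> 'a \<Rightarrow> real^2^2"
    and \<mu>0 :: "real^2"
    and \<Sigma>0 :: "real^2^2"
    and Q :: "real measure"
    and \<alpha> :: real
  assumes M: "prob_space M"
    and X_rv: "\<And>i. i \<ge> 1 \<Longrightarrow> X i \<in> borel_measurable M"
    and X_indep: "prob_space.indep_vars M (\<lambda>_. borel) X {1..}"
    and X_dist: "\<And>i. i \<ge> 1 \<Longrightarrow> distr M borel (X i) = H0"
    and T_meas: "\<And>n. T n \<in> borel_measurable M"
    and C_meas: "\<And>n. C n \<in> borel_measurable M"
    and T_stat: "\<And>n \<omega> \<omega>'. \<omega> \<in> space M \<Longrightarrow> \<omega>' \<in> space M \<Longrightarrow>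
                   (\<forall>i\<in>{1..n}. X i \<omega> = X i \<omega>') \<Longrightarrow> T n \<omega> = T n \<omega>'"
    and C_stat: "\<And>n \<omega> \<omega>'. \<omega> \<in> space M \<Longrightarrow> \<omega>' \<in> space M \<Longrightarrow>
                   (\<forall>i\<in>{1..n}. X i \<omega> = X i \<omega>') \<Longrightarrow> C n \<omega> = C n \<omega>'"
    and C_sym: "\<And>n \<omega>. \<omega> \<in> space M \<Longrightarrow> transpose (C n \<omega>) = C n \<omega>"
    and C_inv: "\<And>n \<omega>. \<omega> \<in> space M \<Longrightarrow> invertible (C n \<omega>)"
    and T_conv: "AE \<omega> in M. (\<lambda>n. T n \<omega>) \<longlonglongrightarrow> \<mu>0"
    and C_conv: "AE \<omega> in M. (\<lambda>n. C n \<omega>) \<longlonglongrightarrow> \<Sigma>0"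
    and \<Sigma>0_sym: "transpose \<Sigma>0 = \<Sigma>0"
    and \<Sigma>0_pd: "\<And>x. x \<noteq> 0 \<Longrightarrow> x \<bullet> (\<Sigma>0 *v x) > 0"
    and G0_cont: "continuous_on UNIV (\<lambda>t. measure H0 {x. mahal x \<mu>0 \<Sigma>0 \<le> t})"
    and Q: "prob_space Q" "sets Q = sets borel" "measure Q {..<0} = 0"
    and \<alpha>: "0 < \<alpha>" "\<alpha> < 1"
    and ref: "\<forall>t \<ge> quantile (cdf Q) \<alpha>.
                cdf Q t - measure H0 {x. mahal x \<mu>0 \<Sigma>0 \<le> t} \<le> 0"
  shows "AE \<omega> in M.
           (\<lambda>n. real_of_int
                   \<lfloor>real n * (SUP t\<in>{quantile (cdf Q) \<alpha>..}.
                       pos_part (cdf Q t - emp_cdf n (\<lambda>i. mahal (X i \<omega>) (T n \<omega>) (C n \<omega>)) t))\<rfloor>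
                 / real n) \<longlonglongrightarrow> 0"
proof -
  interpret prob_space M by (rule M)
  define f where "f x = mahal x \<mu>0 \<Sigma>0" for x
  define \<eta> where "\<eta> = quantile (cdf Q) \<alpha>"
  define G0 where "G0 t = measure H0 {x. f x \<le> t}" for t
  have X1: "X 1 \<in> borel_measurable M" by (rule X_rv) simp
  have H0d: "distr M borel (X 1) = H0" by (rule X_dist) simp
  have Hp: "prob_space H0" unfolding H0d[symmetric] by (rule prob_space_distr[OF X1])
  have Hs: "sets H0 = sets borel" unfolding H0d[symmetric] by simp
  have fc: "continuous_on UNIV f"
    unfolding f_def mahal_def
    by (intro continuous_intros bounded_linear.continuous_on[OF matrix_vector_mul_bounded_linear])
  have fm: "f \<in> borel_measurable borel" using fc by (rule borel_measurable_continuous_onI)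
  have Gc: "continuous_on UNIV (\<lambda>t. measure H0 {x. f x \<le> t})"
    using G0_cont unfolding f_def .
  define \<epsilon> where "\<epsilon> k = 1 / real (Suc k)" for k
  have \<epsilon>0: "\<epsilon> k > 0" for k by (simp add: \<epsilon>_def)
  have "\<forall>k. \<exists>R A \<delta>. R \<ge> 0 \<and> finite A \<and> \<delta> > 0 \<and> measure H0 {x. R < norm x} \<le> \<epsilon> k/4 \<and>
     (\<forall>t. measure H0 {x. f x \<le> t} \<le> \<epsilon> k \<or>
          (\<exists>a\<in>A. a + \<delta> \<le> t \<and> measure H0 {x. f x \<le> t} - \<epsilon> k/2 \<le> measure H0 {x. f x \<le> a}))"
    using data_exists[OF Hp Hs fm Gc \<epsilon>0] by blast
  then obtain R A \<delta> where RAd: "\<And>k. R k \<ge> 0 \<and> finite (A k) \<and> \<delta> k > 0 \<and> measure H0 {x. R k < norm x} \<le> \<epsilon> k/4 \<and>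
     (\<forall>t. G0 t \<le> \<epsilon> k \<or> (\<exists>a\<in>A k. a + \<delta> k \<le> t \<and> G0 t - \<epsilon> k/2 \<le> G0 a))"
    unfolding G0_def by metis
  define E where "E k a = {x. f x \<le> a \<and> norm x \<le> R k}" for k a
  have Eb: "E k a \<in> sets borel" for k a
    unfolding E_def using fm by measurable
  have freq: "AE \<omega> in M. \<forall>k. \<forall>a\<in>A k. eventually (\<lambda>n. real (card {i\<in>{1..n}. X i \<omega> \<in> E k a}) / real n > measure H0 (E k a) - \<epsilon> k/4) sequentially"
    unfolding AE_all_countable
  proof
    fix k
    show "AE \<omega> in M. \<forall>a\<in>A k. eventually (\<lambda>n. real (card {i\<in>{1..n}. X i \<omega> \<in> E k a}) / real n > measure H0 (E k a) - \<epsilon> k/4) sequentially"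
      using RAd[of k] by (intro AE_finite_allI freq_lower[OF M X_rv X_indep X_dist Eb]) (auto simp: \<epsilon>0)
  qed
  have det0: "det \<Sigma>0 \<noteq> 0" by (rule pd_det) (rule \<Sigma>0_pd)
  have cdf_le1: "cdf Q t \<le> 1" for t
    unfolding cdf_def using prob_space.prob_le_1[OF Q(1)] by simp
  have emp0: "emp_cdf n D t \<ge> 0" for n D t unfolding emp_cdf_def by simp
  show ?thesis
    using freq T_conv C_conv AE_space
  proof (eventually_elim)
    case (elim \<omega>)
    note fr = elim(1) and Tc = elim(2) and Cc = elim(3) and \<omega>M = elim(4)
    define D where "D n i = mahal (X i \<omega>) (T n \<omega>) (C n \<omega>)" for n i
    define dn where "dn n = (SUP t\<in>{\<eta>..}. pos_part (cdf Q t - emp_cdf n (D n) t))" for n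
    have bdd: "bdd_above ((\<lambda>t. pos_part (cdf Q t - emp_cdf n (D n) t)) ` {\<eta>..})" for n
    proof (rule bdd_aboveI2[of _ _ 1])
      fix t
      have "cdf Q t - emp_cdf n (D n) t \<le> 1" using cdf_le1[of t] emp0[of n "D n" t] by linarith
      thus "pos_part (cdf Q t - emp_cdf n (D n) t) \<le> 1" by (simp add: pos_part_def)
    qed
    have dn0: "dn n \<ge> 0" for n
      unfolding dn_def by (rule cSUP_upper2[OF bdd, of \<eta>]) (auto simp: pos_part_def)
    have dn_le: "dn n \<le> e" if "e > 0" "\<And>t. t \<ge> \<eta> \<Longrightarrow> cdf Q t - emp_cdf n (D n) t \<le> e" for n e
      unfolding dn_def using that by (intro cSUP_least) (auto simp: pos_part_def)
    have key: "eventually (\<lambda>n. dn n \<le> \<epsilon> k) sequentially" for k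
    proof -
      obtain Rk: "R k \<ge> 0" and Af: "finite (A k)" and dk: "\<delta> k > 0"
        and tail: "measure H0 {x. R k < norm x} \<le> \<epsilon> k/4"
        and grid: "\<And>t. G0 t \<le> \<epsilon> k \<or> (\<exists>a\<in>A k. a + \<delta> k \<le> t \<and> G0 t - \<epsilon> k/2 \<le> G0 a)"
        using RAd[of k] by blast
      have Bc: "(\<lambda>n. matrix_inv (C n \<omega>)) \<longlonglongrightarrow> matrix_inv \<Sigma>0"
        by (rule matrix_inv_tendsto[OF Cc det0 C_inv[OF \<omega>M]])
      have ev1: "eventually (\<lambda>n. \<forall>x. norm x \<le> R k \<longrightarrow>
          \<bar>(x - T n \<omega>) \<bullet> (matrix_inv (C n \<omega>) *v (x - T n \<omega>)) - (x - \<mu>0) \<bullet> (matrix_inv \<Sigma>0 *v (x - \<mu>0))\<bar> < \<delta> k) sequentially"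
        by (rule perturb[OF Tc Bc Rk dk])
      have ev2: "eventually (\<lambda>n. \<forall>a\<in>A k. real (card {i\<in>{1..n}. X i \<omega> \<in> E k a}) / real n > measure H0 (E k a) - \<epsilon> k/4) sequentially"
        using fr Af by (simp add: eventually_ball_finite)
      show ?thesis
        using ev1 ev2
      proof eventually_elim
        case (elim n)
        note pert = elim(1) and frn = elim(2)
        show "dn n \<le> \<epsilon> k"
        proof (rule dn_le[OF \<epsilon>0])
          fix t assume t: "t \<ge> \<eta>"
          have "cdf Q t \<le> G0 t" using ref t unfolding G0_def f_def \<eta>_def by auto
          moreover have "G0 t - \<epsilon> k \<le> emp_cdf n (D n) t"
          proof (cases "G0 t \<le> \<epsilon> k")
            case True thus ?thesis using emp0[of n "D n" t] by linarith
          next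
            case False
            then obtain a where aA: "a \<in> A k" and at: "a + \<delta> k \<le> t" and Ga: "G0 t - \<epsilon> k/2 \<le> G0 a"
              using grid[of t] by blast
            have sub: "{i\<in>{1..n}. X i \<omega> \<in> E k a} \<subseteq> {i\<in>{1..n}. D n i \<le> t}"
            proof safe
              fix i assume "X i \<omega> \<in> E k a"
              hence "norm (X i \<omega>) \<le> R k" "f (X i \<omega>) \<le> a" by (auto simp: E_def)
              with pert have "\<bar>D n i - f (X i \<omega>)\<bar> < \<delta> k"
                unfolding D_def f_def mahal_def by blast
              thus "D n i \<le> t" using \<open>f (X i \<omega>) \<le> a\<close> at by linarith
            qed
            have "card {i\<in>{1..n}. X i \<omega> \<in> E k a} \<le> card {i\<in>{1..n}. D n i \<le> t}"
              by (rule card_mono[OF _ sub]) simp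
            hence "real (card {i\<in>{1..n}. X i \<omega> \<in> E k a}) / real n \<le> emp_cdf n (D n) t"
              unfolding emp_cdf_def by (intro divide_right_mono) auto
            moreover have "measure H0 (E k a) - \<epsilon> k/4 < real (card {i\<in>{1..n}. X i \<omega> \<in> E k a}) / real n"
              using frn aA by blast
            moreover have "G0 a \<le> measure H0 (E k a) + measure H0 {x. R k < norm x}"
            proof -
              interpret H: prob_space H0 by (rule Hp)
              have s1: "E k a \<in> sets H0" using Eb Hs by simp
              have "{x::real^2. R k < norm x} \<in> sets borel" by measurable
              hence s2: "{x::real^2. R k < norm x} \<in> sets H0" using Hs by simp
              have "G0 a \<le> measure H0 (E k a \<union> {x. R k < norm x})"
                unfolding G0_def using s1 s2 by (intro H.finite_measure_mono) (auto simp: E_def)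
              also have "\<dots> \<le> measure H0 (E k a) + measure H0 {x. R k < norm x}"
                using s1 s2 by (rule measure_Un_le)
              finally show ?thesis .
            qed
            ultimately show ?thesis using Ga tail by linarith
          qed
          ultimately show "cdf Q t - emp_cdf n (D n) t \<le> \<epsilon> k" by linarith
        qed
      qed
    qed
    have dlim: "dn \<longlonglongrightarrow> 0"
    proof (rule order_tendstoI)
      fix b :: real assume "b < 0"
      thus "eventually (\<lambda>n. b < dn n) sequentially" using dn0 by (intro always_eventually allI) (rule less_le_trans[OF _ dn0])
    next
      fix b :: real assume "b > 0"
      then obtain k where "inverse (real (Suc k)) < b" using reals_Archimedean by blast
      hence "\<epsilon> k < b" by (simp add: \<epsilon>_def field_simps)
      thus "eventually (\<lambda>n. dn n < b) sequentially"
        using key[of k] by (auto elim: eventually_mono)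
    qed
    define F where "F n = real_of_int \<lfloor>real n * dn n\<rfloor> / real n" for n
    have F0: "0 \<le> F n" for n unfolding F_def using dn0[of n] by simp
    have F1: "F n \<le> dn n" for n
    proof (cases "n = 0")
      case True thus ?thesis using dn0 by (simp add: F_def)
    next
      case False
      have "real_of_int \<lfloor>real n * dn n\<rfloor> \<le> real n * dn n" by simp
      thus ?thesis using False unfolding F_def by (simp add: divide_simps mult.commute)
    qed
    have "F \<longlonglongrightarrow> 0"
      by (rule tendsto_sandwich[of "\<lambda>_. 0" F sequentially dn]) (auto simp: F0 F1 dlim)
    thus ?case unfolding F_def dn_def D_def \<eta>_def .
  qed
qed

end
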